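(* Let $t>0$ and let $X,Y\subset\mathbb{R}^D$ be finite sets such that the weighting vectors of $tX$, $tY$ and $t(X\cup Y)$ all have nonnegative entries. Then $0\le d^t_{Mag}(X,Y)\le 2\,|X\cup Y|$, where $d^t_{Mag}(X,Y)=2\,\mathrm{Mag}(t(X\cup Y))-\mathrm{Mag}(tX)-\mathrm{Mag}(tY)$.
   Context: For a finite set $A\subset\mathbb{R}^D$ and $t>0$, the similarity matrix $\zeta_{tA}(x,y)=\exp(-t\|x-y\|)$ ($x,y\in A$) is invertible; the weighting vector of $tA$ is $\mathbf{w}^t_A=\zeta_{tA}^{-1}\mathbb{1}$ and $\mathrm{Mag}(tA)=\sum_{x\in A}\mathbf{w}^t_A(x)$. $|A|$ is the number of points of $A$. *)

theory Defs
  imports "HOL-Analysis.Analysis"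
begin

definition similarity :: "'a::euclidean_space \<Rightarrow> 'a \<Rightarrow> real" where
  "similarity x y = exp (- norm (x - y))"

text \<open>Weighting vector of A: the vector w (indexed by A, zero outside A)
  with zeta_A w = 1, i.e. w = zeta_A^{-1} 1 (zeta_A is invertible).\<close>
definition weighting :: "'a::euclidean_space set \<Rightarrow> 'a \<Rightarrow> real" where
  "weighting A = (THE w. (\<forall>x\<in>A. (\<Sum>y\<in>A. similarity x y * w y) = 1)
                          \<and> (\<forall>x. x \<notin> A \<longrightarrow> w x = 0))"

definition magnitude :: "'a::euclidean_space set \<Rightarrow> real" where
  "magnitude A = (\<Sum>x\<in>A. weighting A x)"

definition scaled :: "real \<Rightarrow> 'a::euclidean_space set \<Rightarrow> 'a set" where
  "scaled t A = (\<lambda>x. t *\<^sub>R x) ` A"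

definition d_Mag :: "real \<Rightarrow> 'a::euclidean_space set \<Rightarrow> 'a set \<Rightarrow> real" where
  "d_Mag t X Y = 2 * magnitude (scaled t (X \<union> Y)) - magnitude (scaled t X) - magnitude (scaled t Y)"

end

theory Submission
  imports Defs "HOL-Probability.Distributions"
begin

definition pdk :: "('a \<Rightarrow> 'a \<Rightarrow> real) \<Rightarrow> 'a set \<Rightarrow> bool" where
  "pdk K A \<longleftrightarrow> (\<forall>v. (\<exists>x\<in>A. v x \<noteq> 0) \<longrightarrow> 0 < (\<Sum>x\<in>A. \<Sum>y\<in>A. v x * v y * K x y))"

lemma pdk_solve:
  assumes "finite A"
  shows "(\<forall>x y. K x y = K y x) \<Longrightarrow> pdk K A \<Longrightarrow> \<exists>w. \<forall>x\<in>A. (\<Sum>y\<in>A. K x y * w y) = b x"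
  using assms
proof (induction A arbitrary: K b rule: finite_induct)
  case empty
  then show ?case by simp
next
  case (insert a A)
  note sym = insert.prems(1) and pd = insert.prems(2)
  define d where "d = K a a"
  have "0 < (\<Sum>x\<in>insert a A. \<Sum>y\<in>insert a A. (\<lambda>x. if x = a then 1 else 0::real) x * (\<lambda>x. if x = a then 1 else 0::real) y * K x y)"
    by (rule pd[unfolded pdk_def, rule_format]) simp
  also have "\<dots> = d"
  proof -
    have na: "\<And>x. x \<in> A \<Longrightarrow> x \<noteq> a" using insert.hyps by auto
    have z1: "(\<Sum>y\<in>A. (if y = a then 1 else 0) * K a y) = (0::real)"
      by (rule sum.neutral) (auto dest: na)
    have z2: "(\<Sum>x\<in>A. (if x = a then 1 else 0) * K x a +
           (\<Sum>y\<in>A. (if x = a then 1 else 0) * (if y = a then 1 else 0) * K x y)) = (0::real)"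
      by (rule sum.neutral) (auto dest: na)
    show ?thesis using insert.hyps z1 z2 by (simp add: d_def)
  qed
  finally have dpos: "d > 0" .
  define K' where "K' x y = K x y - K x a * K a y / d" for x y
  have symK': "\<forall>x y. K' x y = K' y x"
    unfolding K'_def using sym by (simp add: mult.commute)
  have pdK': "pdk K' A"
    unfolding pdk_def
  proof (intro allI impI)
    fix v :: "'a \<Rightarrow> real"
    assume nz: "\<exists>x\<in>A. v x \<noteq> 0"
    define S where "S = (\<Sum>y\<in>A. K a y * v y)"
    define u where "u = v(a := - S / d)"
    have uv: "\<And>x. x \<in> A \<Longrightarrow> u x = v x" using insert.hyps by (auto simp: u_def)
    have e1: "(\<Sum>x\<in>A. \<Sum>y\<in>A. v x * v y * K' x y)
        = (\<Sum>x\<in>A. \<Sum>y\<in>A. v x * v y * K x y) - S * S / d"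
    proof -
      have "(\<Sum>x\<in>A. \<Sum>y\<in>A. v x * v y * K' x y)
          = (\<Sum>x\<in>A. \<Sum>y\<in>A. v x * v y * K x y - (v x * K a x) * (K a y * v y) / d)"
        unfolding K'_def using sym by (intro sum.cong refl) (simp add: algebra_simps)
      also have "\<dots> = (\<Sum>x\<in>A. \<Sum>y\<in>A. v x * v y * K x y) - (\<Sum>x\<in>A. \<Sum>y\<in>A. (v x * K a x) * (K a y * v y) / d)"
        by (simp add: sum_subtractf)
      also have "(\<Sum>x\<in>A. \<Sum>y\<in>A. (v x * K a x) * (K a y * v y) / d) = S * S / d"
        unfolding S_def by (simp add: sum_distrib_left sum_distrib_right sum_divide_distrib mult.commute)
      finally show ?thesis .
    qed
    have e2: "(\<Sum>x\<in>insert a A. \<Sum>y\<in>insert a A. u x * u y * K x y)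
        = (\<Sum>x\<in>A. \<Sum>y\<in>A. v x * v y * K x y) + 2 * u a * S + u a * u a * d"
    proof -
      have "(\<Sum>x\<in>insert a A. \<Sum>y\<in>insert a A. u x * u y * K x y)
          = u a * u a * K a a + (\<Sum>y\<in>A. u a * u y * K a y) + (\<Sum>x\<in>A. u x * u a * K x a)
            + (\<Sum>x\<in>A. \<Sum>y\<in>A. u x * u y * K x y)"
        by (simp add: sum.insert[OF insert.hyps] sum.distrib add_ac)
      also have "(\<Sum>y\<in>A. u a * u y * K a y) = u a * S"
        unfolding S_def by (simp add: sum_distrib_left uv mult.commute mult.left_commute)
      also have "(\<Sum>x\<in>A. u x * u a * K x a) = u a * S"
        unfolding S_def using sym by (simp add: sum_distrib_left uv mult.commute mult.left_commute)
      also have "(\<Sum>x\<in>A. \<Sum>y\<in>A. u x * u y * K x y) = (\<Sum>x\<in>A. \<Sum>y\<in>A. v x * v y * K x y)"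
        by (simp add: uv)
      finally show ?thesis by (simp add: d_def)
    qed
    have "u a = - S / d" by (simp add: u_def)
    have "2 * (-S/d) * S + (-S/d)*(-S/d)*d = -S*S/d" using dpos by (simp add: field_simps)
    then have "2 * u a * S + u a * u a * d = - S * S / d"
      by (simp only: \<open>u a = - S / d\<close>)
    have unz: "\<exists>x\<in>insert a A. u x \<noteq> 0" using nz uv by auto
    have "0 < (\<Sum>x\<in>insert a A. \<Sum>y\<in>insert a A. u x * u y * K x y)"
      using pd unz unfolding pdk_def by blast
    then show "0 < (\<Sum>x\<in>A. \<Sum>y\<in>A. v x * v y * K' x y)"
      using e1 e2 \<open>2 * u a * S + u a * u a * d = - S * S / d\<close> by simp
  qed
  define b' where "b' x = b x - K x a * b a / d" for x
  obtain w' where w': "\<forall>x\<in>A. (\<Sum>y\<in>A. K' x y * w' y) = b' x"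
    using insert.IH[OF symK' pdK'] by blast
  define wa where "wa = (b a - (\<Sum>y\<in>A. K a y * w' y)) / d"
  define w where "w = w'(a := wa)"
  have ww: "\<And>y. y \<in> A \<Longrightarrow> w y = w' y" using insert.hyps by (auto simp: w_def)
  show ?case
  proof (intro exI ballI)
    fix x assume x: "x \<in> insert a A"
    have "(\<Sum>y\<in>insert a A. K x y * w y) = K x a * wa + (\<Sum>y\<in>A. K x y * w' y)"
    proof -
      have "(\<Sum>y\<in>A. K x y * w y) = (\<Sum>y\<in>A. K x y * w' y)"
        by (intro sum.cong refl) (simp add: ww)
      then show ?thesis using insert.hyps by (simp add: w_def)
    qed
    also have "\<dots> = b x"
    proof (cases "x = a")
      case True
      then show ?thesis using dpos by (simp add: wa_def d_def[symmetric] field_simps)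
    next
      case False
      then have xA: "x \<in> A" using x by auto
      have "(\<Sum>y\<in>A. K' x y * w' y) = (\<Sum>y\<in>A. K x y * w' y) - K x a / d * (\<Sum>y\<in>A. K a y * w' y)"
        unfolding K'_def by (simp add: sum_distrib_left sum_subtractf algebra_simps)
      then have "(\<Sum>y\<in>A. K x y * w' y) = b x - K x a * b a / d + K x a / d * (\<Sum>y\<in>A. K a y * w' y)"
        using w' xA by (simp add: b'_def)
      moreover have "K x a * ((b a - (\<Sum>y\<in>A. K a y * w' y)) / d) = K x a * b a / d - K x a / d * (\<Sum>y\<in>A. K a y * w' y)"
        by (simp add: diff_divide_distrib right_diff_distrib)
      ultimately show ?thesis unfolding wa_def by linarith
    qed
    finally show "(\<Sum>y\<in>insert a A. K x y * w y) = b x" .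
  qed
qed


lemma pow_psd:
  fixes A :: "'a::euclidean_space set"
  shows "0 \<le> (\<Sum>x\<in>A. \<Sum>y\<in>A. u x * u y * (inner x y) ^ k)"
proof (induction k arbitrary: u)
  case 0
  have "(\<Sum>x\<in>A. \<Sum>y\<in>A. u x * u y * (inner x y) ^ 0) = (\<Sum>x\<in>A. u x) * (\<Sum>y\<in>A. u y)"
    by (simp add: sum_product)
  then show ?case by simp
next
  case (Suc k)
  have "(\<Sum>x\<in>A. \<Sum>y\<in>A. u x * u y * (inner x y) ^ Suc k)
      = (\<Sum>x\<in>A. \<Sum>y\<in>A. \<Sum>i\<in>Basis. (u x * inner x i) * (u y * inner y i) * (inner x y) ^ k)"
  proof (intro sum.cong refl)
    fix x y :: 'a
    have "inner x y = (\<Sum>i\<in>Basis. inner x i * inner y i)" by (rule euclidean_inner)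
    then have "u x * u y * (inner x y) ^ Suc k = u x * u y * (inner x y) ^ k * (\<Sum>i\<in>Basis. inner x i * inner y i)"
      by (metis mult.commute mult.left_commute power_Suc)
    also have "\<dots> = (\<Sum>i\<in>Basis. (u x * inner x i) * (u y * inner y i) * (inner x y) ^ k)"
      by (simp add: sum_distrib_left mult_ac)
    finally show "u x * u y * (inner x y) ^ Suc k = (\<Sum>i\<in>Basis. (u x * inner x i) * (u y * inner y i) * (inner x y) ^ k)" .
  qed
  also have "\<dots> = (\<Sum>x\<in>A. \<Sum>i\<in>Basis. \<Sum>y\<in>A. (u x * inner x i) * (u y * inner y i) * (inner x y) ^ k)"
    by (rule sum.cong[OF refl], rule sum.swap)
  also have "\<dots> = (\<Sum>i\<in>Basis. \<Sum>x\<in>A. \<Sum>y\<in>A. (u x * inner x i) * (u y * inner y i) * (inner x y) ^ k)"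
    by (rule sum.swap)
  also have "\<dots> \<ge> 0"
    by (rule sum_nonneg) (rule Suc.IH)
  finally show ?case .
qed

lemma exp_psd:
  fixes A :: "'a::euclidean_space set"
  assumes c: "c \<ge> 0"
  shows "0 \<le> (\<Sum>x\<in>A. \<Sum>y\<in>A. u x * u y * exp (c * inner x y))"
proof -
  have S1: "(\<lambda>n. \<Sum>x\<in>A. \<Sum>y\<in>A. u x * u y * ((c * inner x y) ^ n / fact n)) sums
        (\<Sum>x\<in>A. \<Sum>y\<in>A. u x * u y * exp (c * inner x y))"
  proof (intro sums_sum sums_mult)
    fix x y :: 'a
    show "(\<lambda>n. (c * inner x y) ^ n / fact n) sums exp (c * inner x y)"
      using exp_converges[of "c * inner x y"] by (simp add: divide_inverse mult.commute)
  qed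
  have S0: "(\<lambda>n. 0::real) sums 0" by (rule sums_zero)
  have nn: "0 \<le> (\<Sum>x\<in>A. \<Sum>y\<in>A. u x * u y * ((c * inner x y) ^ n / fact n))" for n
  proof -
    have "(\<Sum>x\<in>A. \<Sum>y\<in>A. u x * u y * ((c * inner x y) ^ n / fact n))
        = c ^ n / fact n * (\<Sum>x\<in>A. \<Sum>y\<in>A. u x * u y * (inner x y) ^ n)"
      by (simp add: sum_distrib_left power_mult_distrib mult_ac)
    also have "\<dots> \<ge> 0" using c pow_psd[where A=A and u=u and k=n] by simp
    finally show ?thesis .
  qed
  show ?thesis using sums_le[OF _ S0 S1] nn by blast
qed

lemma norm_diff_sq_inner:
  fixes x y :: "'a::euclidean_space"
  shows "(norm (x - y))^2 = inner x x + inner y y - 2 * inner x y"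
  by (simp add: power2_norm_eq_inner inner_diff inner_commute algebra_simps)

lemma gauss_psd:
  fixes A :: "'a::euclidean_space set"
  assumes s: "s \<ge> 0"
  shows "0 \<le> (\<Sum>x\<in>A. \<Sum>y\<in>A. v x * v y * exp (- s * (norm (x - y))^2))"
proof -
  define u where "u x = v x * exp (- s * inner x x)" for x
  have "(\<Sum>x\<in>A. \<Sum>y\<in>A. v x * v y * exp (- s * (norm (x - y))^2))
      = (\<Sum>x\<in>A. \<Sum>y\<in>A. u x * u y * exp ((2 * s) * inner x y))"
  proof (intro sum.cong refl)
    fix x y :: 'a
    have "- s * (norm (x - y))^2 = - s * inner x x + - s * inner y y + (2 * s) * inner x y"
      by (simp add: norm_diff_sq_inner algebra_simps)
    then have "exp (- s * (norm (x - y))^2) = exp (- s * inner x x) * exp (- s * inner y y) * exp ((2 * s) * inner x y)"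
      by (simp only: exp_add)
    then show "v x * v y * exp (- s * (norm (x - y))^2) = u x * u y * exp ((2 * s) * inner x y)"
      by (simp add: u_def mult_ac)
  qed
  also have "\<dots> \<ge> 0" using s by (intro exp_psd) simp
  finally show ?thesis .
qed


lemma abs_mult_le_sq: "\<bar>a * b\<bar> \<le> (a^2 + b^2) / (2::real)"
proof -
  have "0 \<le> (\<bar>a\<bar> - \<bar>b\<bar>)^2" by simp
  then have "2 * (\<bar>a\<bar> * \<bar>b\<bar>) \<le> \<bar>a\<bar>^2 + \<bar>b\<bar>^2" by (simp add: power2_diff)
  then show ?thesis by (simp add: abs_mult)
qed

lemma exp_small:
  fixes d :: real
  assumes d: "d > 0" and eta: "\<eta> > 0"
  shows "\<forall>\<^sub>F w in at_right 0. exp (- d / (2 * w^2)) < \<eta>"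
proof -
  have "\<exists>b>0. \<forall>w>0. w < b \<longrightarrow> exp (- d / (2 * w^2)) < \<eta>"
  proof (intro exI[of _ "sqrt (\<eta> * d / 2)"] conjI allI impI)
    show "sqrt (\<eta> * d / 2) > 0" using d eta by simp
    fix w :: real assume w: "w > 0" "w < sqrt (\<eta> * d / 2)"
    define t where "t = d / (2 * w^2)"
    have t: "t > 0" using d w by (simp add: t_def)
    have "1 + t \<le> exp t" by (rule exp_ge_add_one_self)
    then have "t < exp t" by linarith
    then have "exp (- t) < 1 / t" using t by (simp add: exp_minus field_simps)
    also have "1 / t = 2 * w^2 / d" using d w by (simp add: t_def)
    also have "w^2 < \<eta> * d / 2"
    proof -
      have "w^2 < (sqrt (\<eta> * d / 2))^2" by (rule power_strict_mono) (use w in auto)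
      also have "\<dots> = \<eta> * d / 2" using d eta by simp
      finally show ?thesis .
    qed
    then have "2 * w^2 / d < \<eta>" using d by (simp add: field_simps)
    finally show "exp (- d / (2 * w^2)) < \<eta>" by (simp add: t_def)
  qed
  then show ?thesis by (simp add: eventually_at_right_field)
qed

lemma dominance:
  fixes A :: "'a::euclidean_space set" and v :: "'a \<Rightarrow> real"
  assumes fin: "finite A"
  shows "\<exists>b>0. \<forall>w. 0 < w \<and> w < b \<longrightarrow>
    (\<Sum>x\<in>A. (v x)^2) / 2 \<le> (\<Sum>x\<in>A. \<Sum>y\<in>A. v x * v y * exp (- ((norm (x - y))^2) / (2 * w^2)))"
proof (cases "A = {}")
  case True
  then show ?thesis by (auto intro: exI[of _ 1])
next
  case False
  define \<eta> where "\<eta> = 1 / (2 * real (card A))"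
  have cA: "card A > 0" using fin False card_gt_0_iff by blast
  have eta: "\<eta> > 0" using cA by (simp add: \<eta>_def)
  have ev: "\<forall>\<^sub>F w in at_right 0. \<forall>p\<in>{p\<in>A\<times>A. fst p \<noteq> snd p}.
      exp (- ((norm (fst p - snd p))^2) / (2 * w^2)) < \<eta>"
  proof (rule eventually_ball_finite)
    show "finite {p\<in>A\<times>A. fst p \<noteq> snd p}" using fin by auto
    show "\<forall>p\<in>{p\<in>A\<times>A. fst p \<noteq> snd p}. \<forall>\<^sub>F w in at_right 0. exp (- ((norm (fst p - snd p))^2) / (2 * w^2)) < \<eta>"
      using eta by (auto intro!: exp_small[simplified])
  qed
  then obtain b where b: "b > 0" and bP: "\<And>w. w > 0 \<Longrightarrow> w < b \<Longrightarrow> \<forall>p\<in>{p\<in>A\<times>A. fst p \<noteq> snd p}.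
      exp (- ((norm (fst p - snd p))^2) / (2 * w^2)) < \<eta>"
    by (auto simp: eventually_at_right_field)
  show ?thesis
  proof (intro exI[of _ b] conjI allI impI)
    show "b > 0" by (rule b)
    fix w :: real assume w: "0 < w \<and> w < b"
    define E where "E x y = exp (- ((norm (x - y))^2) / (2 * w^2))" for x y :: "'a"
    have Eoff: "E x y < \<eta>" if "x \<in> A" "y \<in> A" "x \<noteq> y" for x y
      using bP[of w] w that by (auto simp: E_def)
    have tm: "(if x = y then (v x)^2 else 0) - \<eta> * ((v x)^2 + (v y)^2) / 2 \<le> v x * v y * E x y"
      if xy: "x \<in> A" "y \<in> A" for x y
    proof (cases "x = y")
      case True
      have "E x y = 1" using True by (simp add: E_def)
      moreover have "0 \<le> \<eta> * ((v x)^2 + (v y)^2) / 2" using eta by simp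
      ultimately show ?thesis using True by (simp add: power2_eq_square)
    next
      case False
      have E0: "E x y > 0" by (simp add: E_def)
      have a1: "- (\<bar>v x * v y\<bar> * E x y) \<le> v x * v y * E x y"
        using E0 by (intro mult_right_mono[of "- \<bar>v x * v y\<bar>", simplified]) auto
      have a2: "\<bar>v x * v y\<bar> * E x y \<le> \<bar>v x * v y\<bar> * \<eta>"
        using Eoff[OF xy False] by (intro mult_left_mono) auto
      have a3: "\<bar>v x * v y\<bar> * \<eta> \<le> ((v x)^2 + (v y)^2) / 2 * \<eta>"
        using eta abs_mult_le_sq[of "v x" "v y"] by (intro mult_right_mono) auto
      have a4: "((v x)^2 + (v y)^2) / 2 * \<eta> = \<eta> * ((v x)^2 + (v y)^2) / 2" by simp
      show ?thesis using False a1 a2 a3 a4 by (simp only: if_False)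
    qed
    have "(\<Sum>x\<in>A. \<Sum>y\<in>A. (if x = y then (v x)^2 else 0) - \<eta> * ((v x)^2 + (v y)^2) / 2)
        \<le> (\<Sum>x\<in>A. \<Sum>y\<in>A. v x * v y * E x y)"
      using tm by (intro sum_mono) auto
    moreover have "(\<Sum>x\<in>A. \<Sum>y\<in>A. (if x = y then (v x)^2 else 0) - \<eta> * ((v x)^2 + (v y)^2) / 2)
        = (\<Sum>x\<in>A. (v x)^2) - \<eta> * real (card A) * (\<Sum>x\<in>A. (v x)^2)"
    proof -
      have 1: "(\<Sum>x\<in>A. \<Sum>y\<in>A. (if x = y then (v x)^2 else 0)) = (\<Sum>x\<in>A. (v x)^2)"
        using fin by (simp add: sum.delta)
      have e: "\<And>x y. \<eta> * ((v x)^2 + (v y)^2) / 2 = \<eta>/2 * (v x)^2 + \<eta>/2 * (v y)^2"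
        by (simp add: algebra_simps)
      have 2: "(\<Sum>x\<in>A. \<Sum>y\<in>A. \<eta> * ((v x)^2 + (v y)^2) / 2)
          = (\<Sum>x\<in>A. \<Sum>y\<in>A. \<eta>/2 * (v x)^2) + (\<Sum>x\<in>A. \<Sum>y\<in>A. \<eta>/2 * (v y)^2)"
        by (simp only: e sum.distrib)
      have 3: "(\<Sum>x\<in>A. \<Sum>y\<in>A. \<eta>/2 * (v x)^2) = real (card A) * (\<eta>/2 * (\<Sum>x\<in>A. (v x)^2))"
        by (simp add: sum_distrib_left)
      have 4: "(\<Sum>x\<in>A. \<Sum>y\<in>A. \<eta>/2 * (v y)^2) = real (card A) * (\<eta>/2 * (\<Sum>x\<in>A. (v x)^2))"
        by (simp add: sum_distrib_left)
      show ?thesis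
        by (simp only: sum_subtractf 1 2 3 4) (simp add: algebra_simps)
    qed
    moreover have "\<eta> * real (card A) = 1/2" using cA by (simp add: \<eta>_def)
    ultimately show "(\<Sum>x\<in>A. (v x)^2) / 2 \<le> (\<Sum>x\<in>A. \<Sum>y\<in>A. v x * v y * exp (- ((norm (x - y))^2) / (2 * w^2)))"
      unfolding E_def by simp
  qed
qed


lemma gauss_integrable: "integrable lborel (\<lambda>u::real. exp (- (u^2 / 2)))"
proof -
  have "integrable lborel (\<lambda>x. sqrt (2 * pi) * normal_density 0 1 x)"
    by (auto intro!: integrable_mult_right integrable_normal_density)
  moreover have "(\<lambda>x. sqrt (2 * pi) * normal_density 0 1 x) = (\<lambda>u::real. exp (- (u^2 / 2)))"
    by (rule ext) (simp add: normal_density_def)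
  ultimately show ?thesis by simp
qed

definition gaussT :: real where
  "gaussT = (\<integral>u. exp (- (u^2 / 2)) \<partial>lborel)"

lemma half_gauss: "((\<lambda>u. exp (- (u^2 / 2))) has_integral gaussT / 2) {0<..}"
proof -
  let ?G = "\<lambda>u::real. exp (- (u^2 / 2))"
  define I where "I = (\<integral>x. indicator {0..} x *\<^sub>R ?G x \<partial>lborel)"
  have int_ind: "integrable lborel (\<lambda>x. indicator {0..} x *\<^sub>R ?G x)"
    by (rule integrable_mult_indicator) (auto intro: gauss_integrable)
  have hb: "has_bochner_integral lborel (\<lambda>x. indicator {0..} x *\<^sub>R ?G x) I"
    unfolding I_def by (rule has_bochner_integral_integrable[OF int_ind])
  have "has_bochner_integral lborel ?G (2 *\<^sub>R I)"
    by (rule has_bochner_integral_even_function[OF hb]) simp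
  then have T: "gaussT = 2 * I"
    unfolding gaussT_def by (simp add: has_bochner_integral_integral_eq)
  have si: "set_integrable lborel {0..} ?G"
    unfolding set_integrable_def by (rule int_ind)
  have "?G integrable_on {0..}" "(LINT x:{0..}|lborel. ?G x) = integral {0..} ?G"
    using set_borel_integral_eq_integral[OF si] by auto
  then have H: "(?G has_integral I) {0..}"
    unfolding I_def set_lebesgue_integral_def by (metis integrable_integral)
  have N1: "negligible {x \<in> {0..} - {0<..}. ?G x \<noteq> 0}"
    by (rule negligible_subset[OF negligible_sing[of 0]]) auto
  have N2: "negligible {x \<in> {0<..} - {0..}. ?G x \<noteq> 0}"
    by (rule negligible_subset[OF negligible_empty]) auto
  have HI: "(?G has_integral I) {0<..}"
    using has_integral_spike_set_eq[OF N1 N2] H by blast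
  have e: "gaussT / 2 = I" using T by simp
  from HI show ?thesis by (simp only: e)
qed

lemma subst_pos:
  fixes q :: real
  assumes q: "q > 0"
  shows "((\<lambda>w. exp (- ((w - q / w)^2 / 2))) has_integral gaussT / 2) {0<..}"
proof -
  define s where "s u = sqrt (u^2 + 4 * q)" for u
  define g where "g u = (u + s u) / 2" for u
  define g' where "g' u = (1 + u / s u) / 2" for u
  define F where "F w = exp (- ((w - q / w)^2 / 2))" for w
  define h where "h u = g' u * exp (- (u^2 / 2))" for u
  have s_sq: "(s u)^2 = u^2 + 4 * q" for u
    unfolding s_def using q by (simp add: add_nonneg_pos)
  have s_gt: "\<bar>u\<bar> < s u" for u
    unfolding s_def using q by (intro real_less_rsqrt) simp
  have s_pos: "s u > 0" for u using s_gt[of u] by linarith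
  have s_neg: "s (- u) = s u" for u by (simp add: s_def)
  have g_pos: "g u > 0" for u using s_gt[of u] by (simp add: g_def)
  have g'_pos: "g' u > 0" for u
  proof -
    have "- s u < u" using s_gt[of u] by linarith
    then have "-1 < u / s u" using s_pos[of u] by (simp add: field_simps)
    then show ?thesis by (simp add: g'_def)
  qed
  have g'_le: "g' u \<le> 1" for u
  proof -
    have "u < s u" using s_gt[of u] by linarith
    then have "u / s u < 1" using s_pos[of u] by (simp add: field_simps)
    then show ?thesis by (simp add: g'_def)
  qed
  have g'_sym: "g' u + g' (- u) = 1" for u
    by (simp add: g'_def s_neg field_simps)
  have g_id: "g u - q / g u = u" for u
  proof -
    have "g u * (g u - u) = ((s u)^2 - u^2) / 4"
      by (simp add: g_def power2_eq_square field_simps)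
    also have "\<dots> = q" by (simp add: s_sq)
    finally have "g u * (g u - u) = q" .
    then have "q / g u = g u - u" using g_pos[of u] by (simp add: field_simps)
    then show ?thesis by simp
  qed
  have inj: "inj_on g UNIV"
  proof (rule inj_onI)
    fix a b assume ab: "g a = g b"
    have "a = g a - q / g a" by (rule g_id[of a, symmetric])
    also have "\<dots> = g b - q / g b" by (simp only: ab)
    also have "\<dots> = b" by (rule g_id)
    finally show "a = b" .
  qed
  have img: "g ` UNIV = {0<..}"
  proof
    show "g ` UNIV \<subseteq> {0<..}" using g_pos by auto
    show "{0<..} \<subseteq> g ` UNIV"
    proof
      fix w :: real assume "w \<in> {0<..}"
      then have w: "w > 0" by simp
      define u where "u = w - q / w"
      have "u^2 + 4 * q = (w + q / w)^2"
        using w by (simp add: u_def power2_eq_square field_simps)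
      then have "s u = w + q / w"
        using w q by (simp add: s_def)
      then have "g u = w" by (simp add: g_def u_def)
      then show "w \<in> g ` UNIV" by (metis rangeI)
    qed
  qed
  have der: "(g has_field_derivative g' u) (at u within UNIV)" for u
  proof -
    have d1: "((\<lambda>u. u^2 + 4 * q) has_real_derivative 2 * u) (at u)"
      by (auto intro!: derivative_eq_intros)
    have d2: "(sqrt has_real_derivative inverse (sqrt (u^2 + 4 * q)) / 2) (at (u^2 + 4 * q))"
      by (rule DERIV_real_sqrt) (use q in \<open>simp add: add_nonneg_pos\<close>)
    have d3: "((\<lambda>u. sqrt (u^2 + 4 * q)) has_real_derivative inverse (sqrt (u^2 + 4 * q)) / 2 * (2 * u)) (at u)"
      using DERIV_chain2[OF d2 d1] by simp
    have d4: "((\<lambda>u. (u + sqrt (u^2 + 4 * q)) / 2) has_real_derivative (1 + inverse (sqrt (u^2 + 4 * q)) / 2 * (2 * u)) / 2) (at u)"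
      by (rule DERIV_cdivide[OF DERIV_add[OF DERIV_ident d3]])
    have ge: "g = (\<lambda>u. (u + sqrt (u^2 + 4 * q)) / 2)" by (rule ext) (simp add: g_def s_def)
    have "(1 + inverse (sqrt (u^2 + 4 * q)) / 2 * (2 * u)) / 2 = g' u"
      using s_pos[of u] unfolding g'_def s_def by (simp add: field_simps)
    then show ?thesis using d4 unfolding ge by simp
  qed
  have Fg: "\<bar>g' u\<bar> * F (g u) = h u" for u
    using g'_pos[of u] by (simp add: F_def h_def g_id)
  have hmeas: "h \<in> borel_measurable lborel"
    unfolding h_def g'_def s_def by measurable
  have int_h: "integrable lborel h"
  proof (rule Bochner_Integration.integrable_bound[OF gauss_integrable hmeas])
    show "AE x in lborel. norm (h x) \<le> norm (exp (- (x^2 / 2)))"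
    proof (rule AE_I2)
      fix x
      have "norm (h x) = g' x * exp (- (x^2 / 2))" using g'_pos[of x] by (simp add: h_def)
      also have "\<dots> \<le> 1 * exp (- (x^2 / 2))" using g'_le[of x] by (intro mult_right_mono) auto
      finally show "norm (h x) \<le> norm (exp (- (x^2 / 2)))" by simp
    qed
  qed
  have int_hr: "integrable lborel (\<lambda>x. h (0 + (-1) * x))"
    by (rule lborel_integrable_real_affine[OF int_h]) simp
  have refl: "(\<integral>x. h x \<partial>lborel) = (\<integral>x. h (0 + (-1) * x) \<partial>lborel)"
    using lborel_integral_real_affine[of "-1" h 0] by simp
  have sum_eq: "(\<lambda>x. h x + h (0 + (-1) * x)) = (\<lambda>x. exp (- (x^2 / 2)))"
  proof (rule ext)
    fix x
    have "h x + h (0 + (-1) * x) = (g' x + g' (- x)) * exp (- (x^2 / 2))"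
      by (simp add: h_def algebra_simps)
    then show "h x + h (0 + (-1) * x) = exp (- (x^2 / 2))" by (simp add: g'_sym)
  qed
  have "gaussT = (\<integral>x. h x + h (0 + (-1) * x) \<partial>lborel)"
    unfolding gaussT_def sum_eq ..
  also have "\<dots> = (\<integral>x. h x \<partial>lborel) + (\<integral>x. h (0 + (-1) * x) \<partial>lborel)"
    by (rule Bochner_Integration.integral_add[OF int_h int_hr])
  finally have hval: "(\<integral>x. h x \<partial>lborel) = gaussT / 2" using refl by simp
  have hI: "(h has_integral gaussT / 2) UNIV"
    using has_integral_integral_lborel[OF int_h] hval by simp
  have habs: "h absolutely_integrable_on UNIV"
    using hI g'_pos by (intro nonnegative_absolutely_integrable_1) (auto simp: h_def intro!: mult_nonneg_nonneg less_imp_le)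
  have lhs: "(\<lambda>x. \<bar>g' x\<bar> * F (g x)) absolutely_integrable_on UNIV \<and>
      integral UNIV (\<lambda>x. \<bar>g' x\<bar> * F (g x)) = gaussT / 2"
    using habs hI by (simp add: Fg integral_unique)
  have "F absolutely_integrable_on g ` UNIV \<and> integral (g ` UNIV) F = gaussT / 2"
    using has_absolute_integral_change_of_variables_1'[of UNIV g g' F "gaussT / 2"] der inj lhs
    by simp
  then have "F integrable_on {0<..}" "integral {0<..} F = gaussT / 2"
    using img by (auto simp: absolutely_integrable_on_def)
  then have "(F has_integral gaussT / 2) {0<..}" by (metis integrable_integral)
  moreover have "F = (\<lambda>w. exp (- ((w - q / w)^2 / 2)))" by (rule ext) (simp add: F_def)
  ultimately show ?thesis by simp
qed


definition kern :: "real \<Rightarrow> real \<Rightarrow> real" where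
  "kern r w = exp (- (w^2 / 2) - r^2 / (2 * w^2))"

lemma kern_split: "kern r w = exp (- (w^2 / 2)) * exp (- (r^2) / (2 * w^2))"
proof -
  have "- (w^2 / 2) - r^2 / (2 * w^2) = - (w^2 / 2) + (- (r^2) / (2 * w^2))" by simp
  then show ?thesis unfolding kern_def by (simp only: exp_add)
qed

lemma kernel_integral:
  assumes r: "r \<ge> 0"
  shows "(kern r has_integral exp (- r) * (gaussT / 2)) {0<..}"
proof (cases "r = 0")
  case True
  have "kern r = (\<lambda>u. exp (- (u^2 / 2)))" using True by (simp add: kern_def fun_eq_iff)
  then show ?thesis using half_gauss True by simp
next
  case False
  then have rp: "r > 0" using r by simp
  have "((\<lambda>w. exp (- r) * exp (- ((w - r / w)^2 / 2))) has_integral exp (- r) * (gaussT / 2)) {0<..}"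
    by (rule has_integral_mult_right[OF subst_pos[OF rp]])
  moreover have "exp (- r) * exp (- ((w - r / w)^2 / 2)) = kern r w" if "w \<in> {0<..}" for w
  proof -
    have w: "w > 0" using that by simp
    have "- r + - ((w - r / w)^2 / 2) = - (w^2 / 2) - r^2 / (2 * w^2)"
      using w by (simp add: power2_eq_square field_simps)
    then show ?thesis by (simp add: kern_def exp_add[symmetric])
  qed
  ultimately show ?thesis by (rule has_integral_eq[rotated])
qed

lemma pd_sim_gen:
  fixes A :: "'a::euclidean_space set"
  assumes fin: "finite A"
  shows "pdk similarity A"
  unfolding pdk_def
proof (intro allI impI)
  fix v :: "'a \<Rightarrow> real"
  assume nz: "\<exists>x\<in>A. v x \<noteq> 0"
  define qf where "qf = (\<Sum>x\<in>A. \<Sum>y\<in>A. v x * v y * similarity x y)"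
  define Q where "Q w = (\<Sum>x\<in>A. \<Sum>y\<in>A. v x * v y * kern (norm (x - y)) w)" for w
  define D where "D w = (\<Sum>x\<in>A. \<Sum>y\<in>A. v x * v y * exp (- ((norm (x - y))^2) / (2 * w^2)))" for w
  have HQ0: "((\<lambda>w. \<Sum>x\<in>A. \<Sum>y\<in>A. v x * v y * kern (norm (x - y)) w) has_integral
      (\<Sum>x\<in>A. \<Sum>y\<in>A. v x * v y * (exp (- norm (x - y)) * (gaussT / 2)))) {0<..}"
    by (intro has_integral_sum[OF fin] has_integral_mult_right kernel_integral) simp
  have EQ: "(\<Sum>x\<in>A. \<Sum>y\<in>A. v x * v y * (exp (- norm (x - y)) * (gaussT / 2))) = qf * (gaussT / 2)"
    unfolding qf_def by (simp only: similarity_def sum_distrib_right mult.assoc)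
  have Qeq: "Q = (\<lambda>w. \<Sum>x\<in>A. \<Sum>y\<in>A. v x * v y * kern (norm (x - y)) w)"
    by (rule ext) (simp add: Q_def)
  have HQ: "(Q has_integral qf * (gaussT / 2)) {0<..}"
    using HQ0 unfolding EQ Qeq .
  have QD: "Q w = exp (- (w^2 / 2)) * D w" if "w > 0" for w
  proof -
    have "Q w = (\<Sum>x\<in>A. \<Sum>y\<in>A. exp (- (w^2 / 2)) * (v x * v y * exp (- ((norm (x - y))^2) / (2 * w^2))))"
      unfolding Q_def kern_split by (intro sum.cong refl) (simp only: mult_ac)
    then show ?thesis unfolding D_def by (simp add: sum_distrib_left)
  qed
  have Dnn: "D w \<ge> 0" if "w > 0" for w
  proof -
    have "0 \<le> (\<Sum>x\<in>A. \<Sum>y\<in>A. v x * v y * exp (- (1 / (2 * w^2)) * (norm (x - y))^2))"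
      by (rule gauss_psd) simp
    also have "\<dots> = D w" unfolding D_def by (intro sum.cong refl) simp
    finally show ?thesis .
  qed
  have Qnn: "\<forall>w\<in>{0<..}. 0 \<le> Q w" using QD Dnn by simp
  obtain b where b: "b > 0" and bD: "\<And>w. 0 < w \<and> w < b \<Longrightarrow> (\<Sum>x\<in>A. (v x)^2) / 2 \<le> D w"
    using dominance[OF fin, of v] unfolding D_def by blast
  have S2: "(\<Sum>x\<in>A. (v x)^2) > 0"
  proof -
    obtain x0 where "x0 \<in> A" "v x0 \<noteq> 0" using nz by blast
    then show ?thesis by (intro sum_pos2[OF fin, of x0]) auto
  qed
  define a where "a = b / 4"
  define c where "c = b / 2"
  define m where "m = exp (- (c^2 / 2)) * ((\<Sum>x\<in>A. (v x)^2) / 2)"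
  have ac: "0 < a" "a < c" "c < b" using b by (auto simp: a_def c_def)
  have m: "m > 0" using S2 by (simp add: m_def)
  have sub: "{a..c} \<subseteq> {0<..}" using ac by auto
  have Qm: "m \<le> Q w" if "w \<in> {a..c}" for w
  proof -
    have w: "0 < w" "w \<le> c" "w < b" using that ac by auto
    have "w^2 \<le> c^2" using w by (intro power_mono) auto
    then have e: "exp (- (c^2 / 2)) \<le> exp (- (w^2 / 2))" by simp
    have "(\<Sum>x\<in>A. (v x)^2) / 2 \<le> D w" using bD w by simp
    then have "m \<le> exp (- (w^2 / 2)) * D w"
      unfolding m_def using e S2 by (intro mult_mono) auto
    then show ?thesis using QD w by simp
  qed
  have intQ: "Q integrable_on {0<..}" using HQ by blast
  have intQac: "Q integrable_on {a..c}" by (rule integrable_on_subinterval[OF intQ sub])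
  have "(c - a) * m = integral {a..c} (\<lambda>_. m)" using ac by simp
  also have "\<dots> \<le> integral {a..c} Q"
    by (rule integral_le[OF integrable_const_ivl intQac]) (use Qm in auto)
  also have "\<dots> \<le> integral {0<..} Q"
    by (rule integral_subset_le[OF sub intQac intQ Qnn])
  also have "\<dots> = qf * (gaussT / 2)" using HQ by (rule integral_unique)
  finally have pos: "0 < qf * (gaussT / 2)" using ac m by (smt (verit) mult_pos_pos)
  have "gaussT \<ge> 0" unfolding gaussT_def by (rule Bochner_Integration.integral_nonneg) simp
  then show "0 < (\<Sum>x\<in>A. \<Sum>y\<in>A. v x * v y * similarity x y)"
    using pos unfolding qf_def by (simp add: zero_less_mult_iff)
qed


lemma pd_sim: "finite (A :: (real ^ 'n) set) \<Longrightarrow> pdk similarity A"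
  by (rule pd_sim_gen)

lemma sim_sym: "similarity x y = similarity y x"
  by (simp add: similarity_def norm_minus_commute)

lemma sim_self: "similarity x x = 1"
  by (simp add: similarity_def)

lemma sim_pos: "similarity x y > 0"
  by (simp add: similarity_def)

lemma weighting_props:
  fixes A :: "(real ^ 'n) set"
  assumes fin: "finite A"
  shows "(\<forall>x\<in>A. (\<Sum>y\<in>A. similarity x y * weighting A y) = 1) \<and> (\<forall>x. x \<notin> A \<longrightarrow> weighting A x = 0)"
proof -
  let ?P = "\<lambda>w. (\<forall>x\<in>A. (\<Sum>y\<in>A. similarity x y * w y) = 1) \<and> (\<forall>x. x \<notin> A \<longrightarrow> w x = 0)"
  have pd: "pdk similarity A" using pd_sim[OF fin] .
  obtain w where w: "\<forall>x\<in>A. (\<Sum>y\<in>A. similarity x y * w y) = 1"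
    using pdk_solve[OF fin _ pd, of "\<lambda>_. 1"] sim_sym by blast
  define w0 where "w0 x = (if x \<in> A then w x else 0)" for x
  have Pw0: "?P w0"
  proof -
    have "\<forall>x\<in>A. (\<Sum>y\<in>A. similarity x y * w0 y) = 1"
    proof
      fix x assume "x \<in> A"
      have "(\<Sum>y\<in>A. similarity x y * w0 y) = (\<Sum>y\<in>A. similarity x y * w y)"
        by (intro sum.cong refl) (simp add: w0_def)
      then show "(\<Sum>y\<in>A. similarity x y * w0 y) = 1" using w \<open>x \<in> A\<close> by simp
    qed
    then show ?thesis by (simp add: w0_def)
  qed
  have uniq: "w1 = w2" if "?P w1" "?P w2" for w1 w2
  proof (rule ccontr)
    assume ne: "w1 \<noteq> w2"
    define v where "v x = w1 x - w2 x" for x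
    have "\<exists>x\<in>A. v x \<noteq> 0"
    proof (rule ccontr)
      assume "\<not> (\<exists>x\<in>A. v x \<noteq> 0)"
      then have "w1 x = w2 x" for x using that by (cases "x \<in> A") (auto simp: v_def)
      then show False using ne by auto
    qed
    then have pos: "0 < (\<Sum>x\<in>A. \<Sum>y\<in>A. v x * v y * similarity x y)"
      using pd unfolding pdk_def by blast
    have "(\<Sum>x\<in>A. \<Sum>y\<in>A. v x * v y * similarity x y) = (\<Sum>x\<in>A. v x * (\<Sum>y\<in>A. similarity x y * v y))"
      by (simp add: sum_distrib_left mult_ac)
    also have "\<dots> = 0"
    proof (intro sum.neutral ballI)
      fix x assume x: "x \<in> A"
      have "(\<Sum>y\<in>A. similarity x y * v y) = (\<Sum>y\<in>A. similarity x y * w1 y) - (\<Sum>y\<in>A. similarity x y * w2 y)"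
        by (simp add: v_def right_diff_distrib sum_subtractf)
      also have "\<dots> = 0" using that x by simp
      finally show "v x * (\<Sum>y\<in>A. similarity x y * v y) = 0" by simp
    qed
    finally show False using pos by simp
  qed
  have "?P (THE w. ?P w)"
    by (rule theI[where P="?P", OF Pw0]) (rule uniq, assumption, rule Pw0)
  then show ?thesis unfolding weighting_def .
qed

lemma magnitude_mono:
  fixes A B :: "(real ^ 'n) set"
  assumes fin: "finite B" and sub: "A \<subseteq> B"
  shows "magnitude A \<le> magnitude B"
proof -
  have finA: "finite A" using fin sub finite_subset by blast
  define wA where "wA = weighting A"
  define wB where "wB = weighting B"
  note PA = weighting_props[OF finA, folded wA_def]
  note PB = weighting_props[OF fin, folded wB_def]
  define v where "v x = wB x - wA x" for x
  have psd: "0 \<le> (\<Sum>x\<in>B. \<Sum>y\<in>B. v x * v y * similarity x y)"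
  proof (cases "\<exists>x\<in>B. v x \<noteq> 0")
    case True
    then show ?thesis using pd_sim[OF fin] unfolding pdk_def by (simp add: less_imp_le)
  next
    case False
    then show ?thesis by simp
  qed
  define RA where "RA x = (\<Sum>y\<in>B. similarity x y * wA y)" for x
  define RB where "RB x = (\<Sum>y\<in>B. similarity x y * wB y)" for x
  have RB1: "\<And>x. x \<in> B \<Longrightarrow> RB x = 1" using PB by (simp add: RB_def)
  have RA_eq: "RA x = (\<Sum>y\<in>A. similarity x y * wA y)" for x
    unfolding RA_def using fin sub PA by (intro sum.mono_neutral_right) auto
  have RA1: "\<And>x. x \<in> A \<Longrightarrow> RA x = 1" using PA by (simp add: RA_eq)
  have "(\<Sum>x\<in>B. \<Sum>y\<in>B. v x * v y * similarity x y) = (\<Sum>x\<in>B. v x * (RB x - RA x))"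
  proof -
    have "(\<Sum>x\<in>B. \<Sum>y\<in>B. v x * v y * similarity x y) = (\<Sum>x\<in>B. v x * (\<Sum>y\<in>B. similarity x y * v y))"
      by (simp add: sum_distrib_left mult_ac)
    also have "\<dots> = (\<Sum>x\<in>B. v x * (RB x - RA x))"
      by (simp add: RA_def RB_def v_def right_diff_distrib sum_subtractf)
    finally show ?thesis .
  qed
  also have "\<dots> = (\<Sum>x\<in>B. wB x * (RB x - RA x)) - (\<Sum>x\<in>B. wA x * (RB x - RA x))"
    by (simp add: v_def left_diff_distrib sum_subtractf)
  also have "(\<Sum>x\<in>B. wA x * (RB x - RA x)) = 0"
  proof (intro sum.neutral ballI)
    fix x assume "x \<in> B"
    show "wA x * (RB x - RA x) = 0"
      using PA RA1 RB1 \<open>x \<in> B\<close> by (cases "x \<in> A") auto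
  qed
  also have "(\<Sum>x\<in>B. wB x * (RB x - RA x)) = (\<Sum>x\<in>B. wB x) - (\<Sum>x\<in>B. wB x * RA x)"
    using RB1 by (simp add: right_diff_distrib sum_subtractf)
  also have "(\<Sum>x\<in>B. wB x * RA x) = (\<Sum>y\<in>B. wA y * RB y)"
  proof -
    have "(\<Sum>x\<in>B. wB x * RA x) = (\<Sum>x\<in>B. \<Sum>y\<in>B. wB x * similarity x y * wA y)"
      unfolding RA_def by (simp add: sum_distrib_left mult_ac)
    also have "\<dots> = (\<Sum>y\<in>B. \<Sum>x\<in>B. wB x * similarity x y * wA y)"
      by (rule sum.swap)
    also have "\<dots> = (\<Sum>y\<in>B. wA y * RB y)"
      unfolding RB_def by (simp add: sum_distrib_left mult_ac, intro sum.cong refl, simp add: sim_sym)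
    finally show ?thesis .
  qed
  also have "\<dots> = (\<Sum>y\<in>B. wA y)"
    using RB1 by simp
  also have "\<dots> = (\<Sum>y\<in>A. wA y)"
    using fin sub PA by (intro sum.mono_neutral_right) auto
  finally show ?thesis using psd
    by (simp add: magnitude_def wA_def wB_def)
qed

lemma magnitude_le_card:
  fixes A :: "(real ^ 'n) set"
  assumes fin: "finite A" and nn: "\<forall>x\<in>A. weighting A x \<ge> 0"
  shows "magnitude A \<le> real (card A)"
proof -
  note P = weighting_props[OF fin]
  have "weighting A x \<le> 1" if x: "x \<in> A" for x
  proof -
    have "similarity x x * weighting A x \<le> (\<Sum>y\<in>A. similarity x y * weighting A y)"
      by (rule member_le_sum[OF x _ fin]) (use nn in \<open>auto intro!: mult_nonneg_nonneg less_imp_le[OF sim_pos]\<close>)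
    then show ?thesis using P x by (simp add: sim_self)
  qed
  then have "(\<Sum>x\<in>A. weighting A x) \<le> (\<Sum>x\<in>A. 1)" by (intro sum_mono) auto
  then show ?thesis by (simp add: magnitude_def)
qed

theorem theorem5p5:
  fixes X Y :: "(real ^ 'n) set" and t :: real
  assumes "t > 0" and "finite X" and "finite Y"
    and "\<forall>x\<in>scaled t X. weighting (scaled t X) x \<ge> 0"
    and "\<forall>x\<in>scaled t Y. weighting (scaled t Y) x \<ge> 0"
    and "\<forall>x\<in>scaled t (X \<union> Y). weighting (scaled t (X \<union> Y)) x \<ge> 0"
  shows "0 \<le> d_Mag t X Y \<and> d_Mag t X Y \<le> 2 * real (card (X \<union> Y))"
proof -
  have finU: "finite (scaled t (X \<union> Y))" using assms(2,3) by (simp add: scaled_def)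
  have subX: "scaled t X \<subseteq> scaled t (X \<union> Y)" and subY: "scaled t Y \<subseteq> scaled t (X \<union> Y)"
    by (auto simp: scaled_def)
  have finX: "finite (scaled t X)" and finY: "finite (scaled t Y)"
    using assms(2,3) by (auto simp: scaled_def)
  have mX: "magnitude (scaled t X) \<le> magnitude (scaled t (X \<union> Y))"
    by (rule magnitude_mono[OF finU subX])
  have mY: "magnitude (scaled t Y) \<le> magnitude (scaled t (X \<union> Y))"
    by (rule magnitude_mono[OF finU subY])
  have nX: "0 \<le> magnitude (scaled t X)"
    unfolding magnitude_def using assms(4) by (intro sum_nonneg) auto
  have nY: "0 \<le> magnitude (scaled t Y)"
    unfolding magnitude_def using assms(5) by (intro sum_nonneg) auto
  have inj: "inj_on (\<lambda>x. t *\<^sub>R x) (X \<union> Y)"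
    using assms(1) by (intro inj_onI) simp
  have card: "card (scaled t (X \<union> Y)) = card (X \<union> Y)"
    unfolding scaled_def using card_image[OF inj] .
  have mU: "magnitude (scaled t (X \<union> Y)) \<le> real (card (X \<union> Y))"
    using magnitude_le_card[OF finU assms(6)] card by simp
  show ?thesis unfolding d_Mag_def using mX mY nX nY mU by linarith
qed

end
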